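(* Let $\mu>0$, $\alpha>0$, $f(x)=xe^{-x}$, and let $\beta\in L^\infty_+(0,+\infty)$ satisfy $\int_0^{\infty}\beta(a)e^{-\mu a}\,da=1$. Let $U(t)$ be the semiflow on $L^1_+(0,\infty)$ generated by $\partial_tu+\partial_au=-\mu u$, $u(t,0)=\alpha f(\int_0^\infty\beta(a)u(t,a)\,da)$, $u(0,\cdot)=u_0$. Then $U$ is asymptotically smooth in the sense that for every bounded set $B\subset L^1_+(0,\infty)$, $\lim_{t\to\infty}\kappa(U(t)B)=0$, where $\kappa$ is the Kuratowski measure of non-compactness, $\kappa(B)=\inf\{\varepsilon>0: B$ can be covered by finitely many balls of radius $\le\varepsilon\}$.
   Context: Solutions are in the integrated sense: $u(t,a)=e^{-\mu t}u_0(a-t)$ for $a\ge t$, $u(t,a)=e^{-\mu a}b(t-a)$ for $a\le t$, where $b$ is the continuous solution of $b(t)=\alpha f\big(\int_t^\infty\beta(a)e^{-\mu t}u_0(a-t)\,da+\int_0^t\beta(a)e^{-\mu a}b(t-a)\,da\big)$. *)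

theory Defs
  imports "HOL-Analysis.Analysis"
begin

definition fnl :: "real \<Rightarrow> real" where
  "fnl x = x * exp (- x)"

definition L1p :: "(real \<Rightarrow> real) set" where
  "L1p = {u. set_integrable lborel {0<..} u \<and> (\<forall>a>0. 0 \<le> u a)}"

definition L1dist :: "(real \<Rightarrow> real) \<Rightarrow> (real \<Rightarrow> real) \<Rightarrow> real" where
  "L1dist u v = (LINT a:{0<..}|lborel. \<bar>u a - v a\<bar>)"

definition L1norm :: "(real \<Rightarrow> real) \<Rightarrow> real" where
  "L1norm u = (LINT a:{0<..}|lborel. \<bar>u a\<bar>)"

text \<open>Kuratowski measure of noncompactness in the metric space L^1_+(0,\<infinity>):
  infimum of \<epsilon> > 0 such that B is covered by finitely many closed balls (centred in the space)
  of radius \<epsilon>; it is \<infinity> if no such cover exists.\<close>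
definition kuratowski :: "(real \<Rightarrow> real) set \<Rightarrow> ereal" where
  "kuratowski B = Inf {ereal \<epsilon> | \<epsilon>. \<epsilon> > 0 \<and>
      (\<exists>C. finite C \<and> C \<subseteq> L1p \<and> B \<subseteq> (\<Union>c\<in>C. {u. L1dist u c \<le> \<epsilon>}))}"

text \<open>U is the semiflow of the age-structured model, in the integrated sense.\<close>
definition is_semiflow :: "real \<Rightarrow> real \<Rightarrow> (real \<Rightarrow> real) \<Rightarrow>
    (real \<Rightarrow> (real \<Rightarrow> real) \<Rightarrow> (real \<Rightarrow> real)) \<Rightarrow> bool" where
  "is_semiflow \<mu> \<alpha> \<beta> U \<longleftrightarrow>
     (\<forall>u0\<in>L1p. \<exists>b. continuous_on {0..} b \<and>
        (\<forall>t\<ge>0. b t = \<alpha> * fnl ((LINT a:{t<..}|lborel. \<beta> a * exp (- \<mu> * t) * u0 (a - t))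
                               + (LINT a:{0<..<t}|lborel. \<beta> a * exp (- \<mu> * a) * b (t - a)))) \<and>
        (\<forall>t\<ge>0. \<forall>a>0. U t u0 a =
            (if t \<le> a then exp (- \<mu> * t) * u0 (a - t) else exp (- \<mu> * a) * b (t - a))))"

end

theory Submission
  imports Defs "HOL-Analysis.Analysis"
begin

definition TC :: "(real \<Rightarrow> real) \<Rightarrow> bool" where
  "TC f \<longleftrightarrow> (\<forall>e>0. \<exists>d>0. \<forall>h. \<bar>h\<bar> < d \<longrightarrow> (\<integral>x. \<bar>f (x + h) - f x\<bar> \<partial>lborel) < e)"

lemma shift_integrable:
  fixes f :: "real \<Rightarrow> real"
  assumes "integrable lborel f"
  shows "integrable lborel (\<lambda>x. f (x + h))"
  using lborel_integrable_real_affine[OF assms, of 1 h] by (simp add: add.commute)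

lemma shift_integral:
  fixes f :: "real \<Rightarrow> real"
  shows "(\<integral>x. f (x + h) \<partial>lborel) = (\<integral>x. f x \<partial>lborel)"
  using lborel_integral_real_affine[of 1 f h] by (simp add: add.commute)

lemma TC_approx:
  fixes f :: "real \<Rightarrow> real"
  assumes f: "integrable lborel f"
  and ap: "\<And>e. e>0 \<Longrightarrow> \<exists>g. integrable lborel g \<and> (\<integral>x. \<bar>f x - g x\<bar> \<partial>lborel) < e \<and> TC g"
  shows "TC f"
  unfolding TC_def
proof (intro allI impI)
  fix e :: real assume e: "e > 0"
  obtain g where g: "integrable lborel g" "(\<integral>x. \<bar>f x - g x\<bar> \<partial>lborel) < e/3" "TC g"
    using ap[of "e/3"] e by auto
  obtain d where d: "d > 0" "\<And>h. \<bar>h\<bar> < d \<Longrightarrow> (\<integral>x. \<bar>g (x + h) - g x\<bar> \<partial>lborel) < e/3"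
    using g(3) e unfolding TC_def by (meson divide_pos_pos zero_less_numeral)
  show "\<exists>d>0. \<forall>h. \<bar>h\<bar> < d \<longrightarrow> (\<integral>x. \<bar>f (x + h) - f x\<bar> \<partial>lborel) < e"
  proof (intro exI[of _ d] conjI allI impI)
    fix h :: real assume h: "\<bar>h\<bar> < d"
    have i1: "integrable lborel (\<lambda>x. \<bar>f (x + h) - g (x + h)\<bar>)"
      using shift_integrable[OF integrable_abs[OF Bochner_Integration.integrable_diff[OF f g(1)]], of h] by simp
    have i2: "integrable lborel (\<lambda>x. \<bar>g (x + h) - g x\<bar>)"
      by (intro integrable_abs Bochner_Integration.integrable_diff shift_integrable g(1))
    have i3: "integrable lborel (\<lambda>x. \<bar>f x - g x\<bar>)"
      by (intro integrable_abs Bochner_Integration.integrable_diff f g(1))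
    have "(\<integral>x. \<bar>f (x + h) - f x\<bar> \<partial>lborel) \<le>
        (\<integral>x. \<bar>f (x + h) - g (x + h)\<bar> + \<bar>g (x + h) - g x\<bar> + \<bar>f x - g x\<bar> \<partial>lborel)"
      by (rule integral_mono') (auto intro!: integrable_add i1 i2 i3)
    also have "\<dots> = (\<integral>x. \<bar>f (x + h) - g (x + h)\<bar> \<partial>lborel) + (\<integral>x. \<bar>g (x + h) - g x\<bar> \<partial>lborel)
        + (\<integral>x. \<bar>f x - g x\<bar> \<partial>lborel)"
      using i1 i2 i3 by simp
    also have "(\<integral>x. \<bar>f (x + h) - g (x + h)\<bar> \<partial>lborel) = (\<integral>x. \<bar>f x - g x\<bar> \<partial>lborel)"
      using shift_integral[of "\<lambda>x. \<bar>f x - g x\<bar>" h] by simp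
    finally show "(\<integral>x. \<bar>f (x + h) - f x\<bar> \<partial>lborel) < e"
      using g(2) d(2)[OF h] by linarith
  qed (use d in auto)
qed

lemma TC_cont:
  fixes g :: "real \<Rightarrow> real"
  assumes cont: "continuous_on UNIV g" and L: "L \<ge> 0" and supp: "\<And>x. \<bar>x\<bar> > L \<Longrightarrow> g x = 0"
  shows "TC g"
  unfolding TC_def
proof (intro allI impI)
  fix e :: real assume e: "e > 0"
  define S where "S = {-L-2..L+2}"
  have "uniformly_continuous_on S g"
    by (rule compact_uniformly_continuous) (auto simp: S_def intro: continuous_on_subset[OF cont])
  moreover define \<eta> where "\<eta> = e / (2 * (2*L+3))"
  have eta: "\<eta> > 0" using e L by (simp add: \<eta>_def)
  ultimately obtain d0 where d0: "d0 > 0" "\<And>x y. x \<in> S \<Longrightarrow> y \<in> S \<Longrightarrow> dist y x < d0 \<Longrightarrow> dist (g y) (g x) < \<eta>"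
    unfolding uniformly_continuous_on_def by metis
  show "\<exists>d>0. \<forall>h. \<bar>h\<bar> < d \<longrightarrow> (\<integral>x. \<bar>g (x + h) - g x\<bar> \<partial>lborel) < e"
  proof (intro exI[of _ "min 1 d0"] conjI allI impI)
    fix h :: real assume h: "\<bar>h\<bar> < min 1 d0"
    have bnd: "\<bar>g (x + h) - g x\<bar> \<le> \<eta> * indicator {-L-1..L+1} x" for x
    proof (cases "\<bar>x\<bar> \<le> L + 1")
      case True
      then have "x \<in> S" "x + h \<in> S" using h by (auto simp: S_def)
      from d0(2)[OF this] h have "\<bar>g (x + h) - g x\<bar> < \<eta>" by (simp add: dist_real_def)
      moreover have "x \<in> {-L-1..L+1}" using True by auto
      ultimately show ?thesis by simp
    next
      case False
      then have "g x = 0" "g (x + h) = 0" using h L by (auto intro!: supp)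
      then show ?thesis using eta by simp
    qed
    have "(\<integral>x. \<bar>g (x + h) - g x\<bar> \<partial>lborel) \<le> (\<integral>x. \<eta> * indicator {-L-1..L+1} x \<partial>lborel)"
      by (rule integral_mono') (use bnd eta L in \<open>auto intro!: integrable_real_indicator\<close>)
    also have "\<dots> = \<eta> * (2*L+2)" using L by simp
    also have "\<dots> < e" using e L by (simp add: \<eta>_def field_simps) (smt (verit) mult_nonneg_nonneg)
    finally show "(\<integral>x. \<bar>g (x + h) - g x\<bar> \<partial>lborel) < e" .
  qed (use d0 in auto)
qed

lemma L1_dominated:
  fixes s :: "nat \<Rightarrow> real \<Rightarrow> real" and f w :: "real \<Rightarrow> real"
  assumes [measurable]: "\<And>n. s n \<in> borel_measurable lborel" "f \<in> borel_measurable lborel"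
    and w: "integrable lborel w" and lim: "\<And>x. (\<lambda>n. s n x) \<longlonglongrightarrow> f x" and bnd: "\<And>n x. \<bar>s n x\<bar> \<le> w x"
  shows "(\<lambda>n. \<integral>x. \<bar>s n x - f x\<bar> \<partial>lborel) \<longlonglongrightarrow> 0"
proof -
  have fb: "\<bar>f x\<bar> \<le> w x" for x
    using lim[of x] bnd by (intro tendsto_le[OF sequentially_bot _ tendsto_rabs[OF lim[of x]]]) auto
  have "(\<lambda>n. \<integral>x. \<bar>s n x - f x\<bar> \<partial>lborel) \<longlonglongrightarrow> (\<integral>x. 0 \<partial>(lborel::real measure))"
  proof (rule integral_dominated_convergence[where w="\<lambda>x. 2 * w x"])
    show "integrable lborel (\<lambda>x. 2 * w x)" using w by auto
    show "AE x in lborel. (\<lambda>n. \<bar>s n x - f x\<bar>) \<longlonglongrightarrow> 0"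
      using lim by (auto intro!: tendsto_rabs_zero simp: LIM_zero_iff tendsto_diff[where b="f _"] Lim_null[symmetric])
    show "AE x in lborel. norm \<bar>s n x - f x\<bar> \<le> 2 * w x" for n
      using bnd[of n] fb by (auto intro!: AE_I2) (smt (verit))
  qed auto
  then show ?thesis by simp
qed

lemma TC_open:
  fixes U :: "real set"
  assumes U: "open U" "emeasure lborel U < \<infinity>"
  shows "TC (indicator U)"
proof (rule TC_approx)
  have Um[measurable]: "U \<in> sets borel" using U by auto
  show iU: "integrable lborel (indicator U :: real \<Rightarrow> real)"
    using U by (intro integrable_real_indicator) auto
  have nU: "- U \<noteq> {}"
  proof
    assume "- U = {}" then have "U = UNIV" by auto
    then show False using U(2) by simp
  qed
  define g where "g n x = min 1 (real n * infdist x (-U)) * max 0 (min 1 (real n - \<bar>x\<bar>))" for n :: nat and x :: real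
  have gcont: "continuous_on UNIV (g n)" for n
    unfolding g_def by (intro continuous_intros)
  have gm[measurable]: "g n \<in> borel_measurable lborel" for n
    using gcont[of n] by (simp add: borel_measurable_continuous_onI)
  have g01: "0 \<le> g n x \<and> g n x \<le> 1" for n x
  proof -
    have p: "0 \<le> min 1 (real n * infdist x (-U))" "min 1 (real n * infdist x (-U)) \<le> 1"
      by (auto simp: infdist_nonneg)
    have q: "0 \<le> max 0 (min 1 (real n - \<bar>x\<bar>))" "max 0 (min 1 (real n - \<bar>x\<bar>)) \<le> 1"
      by auto
    show ?thesis unfolding g_def
      using p q by (auto intro!: mult_nonneg_nonneg mult_le_one)
  qed
  have g_le: "\<bar>indicator U x - g n x\<bar> \<le> indicator U x" for n x
  proof (cases "x \<in> U")
    case True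
    then show ?thesis using g01[of n x] by simp
  next
    case False
    then have "infdist x (-U) = 0" by (simp add: infdist_zero)
    then show ?thesis using False by (simp add: g_def)
  qed
  have g_lim: "(\<lambda>n. \<bar>indicator U x - g n x\<bar>) \<longlonglongrightarrow> 0" for x
  proof (cases "x \<in> U")
    case True
    have "infdist x (-U) > 0" using True nU U(1) by (intro infdist_pos_not_in_closed) auto
    then obtain N1 :: nat where N1: "1 / infdist x (-U) < N1" using reals_Archimedean2 by blast
    obtain N2 :: nat where N2: "\<bar>x\<bar> + 1 < N2" using reals_Archimedean2 by blast
    have "eventually (\<lambda>n. \<bar>indicator U x - g n x\<bar> = 0) sequentially"
      unfolding eventually_sequentially
    proof (intro exI[of _ "max N1 N2"] allI impI)
      fix n assume n: "max N1 N2 \<le> n"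
      have "1 \<le> real n * infdist x (-U)"
        using N1 n \<open>infdist x (-U) > 0\<close> by (simp add: field_simps) (smt (verit) of_nat_le_iff mult_right_mono)
      moreover have "1 \<le> real n - \<bar>x\<bar>" using N2 n by (smt (verit) of_nat_le_iff max.bounded_iff)
      ultimately have "g n x = 1" by (simp add: g_def)
      then show "\<bar>indicator U x - g n x\<bar> = 0" using True by simp
    qed
    then show ?thesis by (simp add: tendsto_eventually)
  next
    case False
    then have "infdist x (-U) = 0" by (simp add: infdist_zero)
    then show ?thesis using False by (simp add: g_def)
  qed
  have "(\<lambda>n. \<integral>x. \<bar>indicator U x - g n x\<bar> \<partial>lborel) \<longlonglongrightarrow> (\<integral>x. 0 \<partial>(lborel::real measure))"
    apply (rule integral_dominated_convergence[where w="indicator U" and f="\<lambda>x. 0::real" and s="\<lambda>n x. \<bar>indicator U x - g n x\<bar>"])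
    using iU g_lim g_le by auto
  then have lim0: "(\<lambda>n. \<integral>x. \<bar>indicator U x - g n x\<bar> \<partial>lborel) \<longlonglongrightarrow> 0" by simp
  fix e :: real assume e: "e > 0"
  from order_tendstoD(2)[OF lim0 e] obtain n where n: "(\<integral>x. \<bar>indicator U x - g n x\<bar> \<partial>lborel) < e"
    by (meson eventually_sequentially order.refl)
  have "integrable lborel (g n)"
  proof (rule Bochner_Integration.integrable_bound[OF iU])
    show "g n \<in> borel_measurable lborel" by (rule gm)
    show "AE x in lborel. norm (g n x) \<le> norm (indicator U x :: real)"
    proof (rule AE_I2)
      fix x show "norm (g n x) \<le> norm (indicator U x :: real)"
        using g_le[of x n] g01[of n x] by (cases "x \<in> U") auto
    qed
  qed
  moreover have "TC (g n)"
    by (rule TC_cont[OF gcont, of "real n"]) (auto simp: g_def)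
  ultimately show "\<exists>g. integrable lborel g \<and> (\<integral>x. \<bar>indicator U x - g x\<bar> \<partial>lborel) < e \<and> TC g"
    using n by blast
qed

lemma TC_set:
  fixes A :: "real set"
  assumes A[measurable]: "A \<in> sets borel" and fin: "emeasure lborel A < \<infinity>"
  shows "TC (indicator A)"
proof (rule TC_approx)
  show "integrable lborel (indicator A :: real \<Rightarrow> real)" using fin by (intro integrable_real_indicator) auto
  fix e :: real assume e: "e > 0"
  obtain U where U: "open U" "A \<subseteq> U" "emeasure lborel (U - A) < e"
    using outer_regular_lborel[OF A e] by blast
  have Um[measurable]: "U \<in> sets borel" using U(1) by auto
  have UAfin: "emeasure lborel (U - A) < \<infinity>" using order.strict_trans[OF U(3) ennreal_less_top[of e]] by simp
  have "emeasure lborel U \<le> emeasure lborel A + emeasure lborel (U - A)"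
    by (rule order_trans[OF emeasure_mono[of U "A \<union> (U - A)"] emeasure_subadditive]) auto
  also have "\<dots> < \<infinity>" using fin UAfin by (auto simp: less_top ennreal_add_eq_top)
  finally have Ufin: "emeasure lborel U < \<infinity>" .
  have eq: "\<bar>indicator A x - indicator U x\<bar> = (indicator (U - A) x :: real)" for x
    using U(2) by (auto simp: indicator_def)
  have "(\<integral>x. \<bar>indicator A x - indicator U x\<bar> \<partial>lborel) = measure lborel (U - A)"
    unfolding eq by simp
  also have "\<dots> < e"
  proof -
    have "ennreal (measure lborel (U - A)) < ennreal e"
      using U(3) UAfin emeasure_eq_ennreal_measure[of lborel "U - A"] by (simp add: less_top)
    then show ?thesis using e by (simp add: ennreal_less_iff)
  qed
  finally have "(\<integral>x. \<bar>indicator A x - indicator U x\<bar> \<partial>lborel) < e" .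
  moreover have "TC (indicator U)" using TC_open[OF U(1) Ufin] .
  moreover have "integrable lborel (indicator U :: real \<Rightarrow> real)" using Ufin by (intro integrable_real_indicator) auto
  ultimately show "\<exists>g. integrable lborel g \<and> (\<integral>x. \<bar>indicator A x - g x\<bar> \<partial>lborel) < e \<and> TC g"
    by blast
qed

lemma TC_scale:
  assumes "TC f" shows "TC (\<lambda>x. f x * c)"
  unfolding TC_def
proof (intro allI impI)
  fix e :: real assume e: "e > 0"
  obtain d where d: "d > 0" "\<And>h. \<bar>h\<bar> < d \<Longrightarrow> (\<integral>x. \<bar>f (x + h) - f x\<bar> \<partial>lborel) < e / (\<bar>c\<bar> + 1)"
  proof -
    have "e / (\<bar>c\<bar> + 1) > 0" using e by (simp add: add_pos_nonneg)
    then show ?thesis using assms that unfolding TC_def by blast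
  qed
  show "\<exists>d>0. \<forall>h. \<bar>h\<bar> < d \<longrightarrow> (\<integral>x. \<bar>f (x + h) * c - f x * c\<bar> \<partial>lborel) < e"
  proof (intro exI[of _ d] conjI allI impI)
    fix h :: real assume h: "\<bar>h\<bar> < d"
    have "(\<integral>x. \<bar>f (x + h) * c - f x * c\<bar> \<partial>lborel) = \<bar>c\<bar> * (\<integral>x. \<bar>f (x + h) - f x\<bar> \<partial>lborel)"
    proof -
      have "(\<lambda>x. \<bar>f (x + h) * c - f x * c\<bar>) = (\<lambda>x. \<bar>c\<bar> * \<bar>f (x + h) - f x\<bar>)"
        by (rule ext) (simp add: left_diff_distrib[symmetric] abs_mult)
      then show ?thesis by simp
    qed
    also have "\<dots> \<le> \<bar>c\<bar> * (e / (\<bar>c\<bar> + 1))"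
      using d(2)[OF h] by (intro mult_left_mono) auto
    also have "\<dots> < e" using e by (simp add: field_simps)
    finally show "(\<integral>x. \<bar>f (x + h) * c - f x * c\<bar> \<partial>lborel) < e" .
  qed (use d in auto)
qed

lemma TC_add:
  fixes f g :: "real \<Rightarrow> real"
  assumes f: "integrable lborel f" and g: "integrable lborel g" and "TC f" "TC g"
  shows "TC (\<lambda>x. f x + g x)"
  unfolding TC_def
proof (intro allI impI)
  fix e :: real assume e: "e > 0"
  obtain d1 where d1: "d1 > 0" "\<And>h. \<bar>h\<bar> < d1 \<Longrightarrow> (\<integral>x. \<bar>f (x + h) - f x\<bar> \<partial>lborel) < e / 2"
    using assms(3) e half_gt_zero[of e] unfolding TC_def by blast
  obtain d2 where d2: "d2 > 0" "\<And>h. \<bar>h\<bar> < d2 \<Longrightarrow> (\<integral>x. \<bar>g (x + h) - g x\<bar> \<partial>lborel) < e / 2"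
    using assms(4) e half_gt_zero[of e] unfolding TC_def by blast
  show "\<exists>d>0. \<forall>h. \<bar>h\<bar> < d \<longrightarrow> (\<integral>x. \<bar>f (x + h) + g (x + h) - (f x + g x)\<bar> \<partial>lborel) < e"
  proof (intro exI[of _ "min d1 d2"] conjI allI impI)
    fix h :: real assume h: "\<bar>h\<bar> < min d1 d2"
    have i1: "integrable lborel (\<lambda>x. \<bar>f (x + h) - f x\<bar>)"
      by (intro integrable_abs Bochner_Integration.integrable_diff shift_integrable f)
    have i2: "integrable lborel (\<lambda>x. \<bar>g (x + h) - g x\<bar>)"
      by (intro integrable_abs Bochner_Integration.integrable_diff shift_integrable g)
    have "(\<integral>x. \<bar>f (x + h) + g (x + h) - (f x + g x)\<bar> \<partial>lborel) \<le>
       (\<integral>x. \<bar>f (x + h) - f x\<bar> + \<bar>g (x + h) - g x\<bar> \<partial>lborel)"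
      by (rule integral_mono') (use i1 i2 in auto)
    also have "\<dots> = (\<integral>x. \<bar>f (x + h) - f x\<bar> \<partial>lborel) + (\<integral>x. \<bar>g (x + h) - g x\<bar> \<partial>lborel)"
      using i1 i2 by simp
    finally show "(\<integral>x. \<bar>f (x + h) + g (x + h) - (f x + g x)\<bar> \<partial>lborel) < e"
      using d1(2)[of h] d2(2)[of h] h by simp
  qed (use d1 d2 in auto)
qed


lemma TC_integrable:
  fixes f :: "real \<Rightarrow> real"
  assumes "integrable lborel f" shows "TC f"
  using assms
proof (induct rule: integrable_induct)
  case (base A c)
  then show ?case using TC_scale[OF TC_set[of A], of c] by (simp add: mult.commute)
next
  case (add f g)
  then show ?case by (simp add: TC_add)
next
  case (lim f s)
  show ?case
  proof (rule TC_approx[OF lim(5)])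
    fix e :: real assume e: "e > 0"
    have [measurable]: "f \<in> borel_measurable lborel" using lim(5) by auto
    have [measurable]: "s i \<in> borel_measurable lborel" for i using lim(1) by auto
    have "(\<lambda>n. \<integral>x. \<bar>s n x - f x\<bar> \<partial>lborel) \<longlonglongrightarrow> 0"
      by (rule L1_dominated[where w="\<lambda>x. 2 * \<bar>f x\<bar>"]) (use lim in auto)
    from order_tendstoD(2)[OF this e] obtain n where n: "(\<integral>x. \<bar>s n x - f x\<bar> \<partial>lborel) < e"
      by (meson eventually_sequentially order.refl)
    then have "(\<integral>x. \<bar>f x - s n x\<bar> \<partial>lborel) < e" by (simp add: abs_minus_commute)
    then show "\<exists>g. integrable lborel g \<and> (\<integral>x. \<bar>f x - g x\<bar> \<partial>lborel) < e \<and> TC g"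
      using lim(1,2) by blast
  qed
qed

lemma fnl_le1: "fnl x \<le> 1"
proof (cases "x \<le> 0")
  case True
  have "x * exp (-x) \<le> 0" using True by (simp add: mult_nonpos_nonneg)
  then show ?thesis by (simp add: fnl_def)
next
  case False
  have "x < exp x" using exp_ge_add_one_self[of x] by linarith
  then have "x * exp (-x) < exp x * exp (-x)" by (intro mult_strict_right_mono) auto
  then show ?thesis by (simp add: fnl_def exp_minus field_simps)
qed

lemma fnl_nonneg: "0 \<le> x \<Longrightarrow> 0 \<le> fnl x"
  by (simp add: fnl_def)

lemma fnl_lower: "x \<le> 0 \<Longrightarrow> -c \<le> x \<Longrightarrow> x * exp c \<le> fnl x"
  unfolding fnl_def by (intro mult_left_mono_neg) auto

lemma fnl_deriv: "(fnl has_real_derivative (1 - x) * exp (-x)) (at x)"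
  unfolding fnl_def by (auto intro!: derivative_eq_intros simp: algebra_simps)

lemma fnl_deriv_bound: "0 \<le> (z::real) \<Longrightarrow> \<bar>(1 - z) * exp (-z)\<bar> \<le> 1"
proof (cases "z \<le> 1")
  case True
  assume z: "0 \<le> z"
  have "exp (-z) \<le> 1" using z by (simp add: exp_le_one_iff)
  then show ?thesis using True z by (simp add: abs_mult mult_le_one)
next
  case False
  assume z: "0 \<le> z"
  have "\<bar>(1 - z) * exp (-z)\<bar> = (z - 1) * exp (-z)" using False by (simp add: abs_mult)
  also have "\<dots> \<le> z * exp (-z)" by (intro mult_right_mono) auto
  also have "\<dots> \<le> 1" using fnl_le1[of z] by (simp add: fnl_def)
  finally show ?thesis .
qed

lemma fnl_lip:
  assumes "0 \<le> x" "0 \<le> y" shows "\<bar>fnl x - fnl y\<bar> \<le> \<bar>x - y\<bar>"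
proof -
  have *: "\<bar>fnl v - fnl u\<bar> \<le> \<bar>v - u\<bar>" if "0 \<le> u" "u < v" for u v
  proof -
    obtain z where z: "u < z" "z < v" "fnl v - fnl u = (v - u) * ((1 - z) * exp (-z))"
      using MVT2[OF \<open>u < v\<close>, of fnl "\<lambda>z. (1 - z) * exp (-z)"] fnl_deriv by blast
    have "\<bar>fnl v - fnl u\<bar> = \<bar>v - u\<bar> * \<bar>(1 - z) * exp (-z)\<bar>" using z(3) by (simp add: abs_mult)
    also have "\<dots> \<le> \<bar>v - u\<bar> * 1" using fnl_deriv_bound[of z] z that by (intro mult_left_mono) auto
    finally show ?thesis by simp
  qed
  show ?thesis
  proof (cases x y rule: linorder_cases)
    case less then show ?thesis using *[of x y] assms by (simp add: abs_minus_commute)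
  next
    case greater then show ?thesis using *[of y x] assms by simp
  qed simp
qed

lemma exp_tail:
  fixes \<mu> A :: real assumes mu: "\<mu> > 0"
  shows "set_integrable lborel {A..} (\<lambda>x. exp (-\<mu>*x))"
    and "(LINT x:{A..}|lborel. exp (-\<mu>*x)) = exp (-\<mu>*A)/\<mu>"
proof -
  have hi: "((\<lambda>x. exp (-\<mu>*x)) has_integral exp (-\<mu>*A)/\<mu>) {A..}"
    using has_integral_exp_minus_to_infinity[OF mu] .
  have ai: "(\<lambda>x. exp (-\<mu>*x)) absolutely_integrable_on {A..}"
    using hi by (intro nonnegative_absolutely_integrable_1) (auto simp: has_integral_integrable)
  have meas: "(\<lambda>x. indicator {A..} x *\<^sub>R exp (-\<mu>*x)) \<in> borel_measurable lborel" by measurable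
  show si: "set_integrable lborel {A..} (\<lambda>x. exp (-\<mu>*x))"
    using ai integrable_completion[OF meas[unfolded measurable_lborel1]] unfolding set_integrable_def
    by simp
  have "(LINT x:{A..}|lebesgue. exp (-\<mu>*x)) = exp (-\<mu>*A)/\<mu>"
    using set_lebesgue_integral_eq_integral(2)[OF ai] hi by (simp add: integral_unique)
  then show "(LINT x:{A..}|lborel. exp (-\<mu>*x)) = exp (-\<mu>*A)/\<mu>"
    using integral_completion[OF meas[unfolded measurable_lborel1]] unfolding set_lebesgue_integral_def
    by simp
qed

locale model =
  fixes \<mu> \<alpha> :: real and \<beta> :: "real \<Rightarrow> real" and M :: real
  assumes mu: "\<mu> > 0" and al: "\<alpha> > 0" and bm[measurable]: "\<beta> \<in> borel_measurable lborel"
    and bb: "\<And>a. a > 0 \<Longrightarrow> 0 \<le> \<beta> a \<and> \<beta> a \<le> M"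
    and norm1: "(LINT a:{0<..}|lborel. \<beta> a * exp (- \<mu> * a)) = 1"

context model
begin

definition kk :: "real \<Rightarrow> real" where "kk a = indicator {0<..} a * \<beta> a * exp (-\<mu>*a)"

definition I1 :: "(real \<Rightarrow> real) \<Rightarrow> real \<Rightarrow> real" where
  "I1 u0 t = (LINT a:{t<..}|lborel. \<beta> a * exp (- \<mu> * t) * u0 (a - t))"

definition J :: "(real \<Rightarrow> real) \<Rightarrow> real \<Rightarrow> real" where
  "J b t = (LINT a:{0<..<t}|lborel. \<beta> a * exp (- \<mu> * a) * b (t - a))"

lemma M_nonneg: "0 \<le> M" using bb[of 1] by auto

lemma kk_meas[measurable]: "kk \<in> borel_measurable lborel"
  unfolding kk_def by measurable

lemma kk_eq: "(\<lambda>x. indicator {0<..} x *\<^sub>R (\<beta> x * exp (- \<mu> * x))) = kk"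
  by (rule ext) (simp add: kk_def)

lemma kk_int: "integrable lborel kk"
proof (rule ccontr)
  assume "\<not> integrable lborel kk"
  then have "(\<integral>x. kk x \<partial>lborel) = 0" by (simp add: not_integrable_integral_eq)
  moreover have "(\<integral>x. kk x \<partial>lborel) = 1" using norm1 unfolding set_lebesgue_integral_def kk_eq .
  ultimately show False by simp
qed

lemma kk_integral: "(\<integral>x. kk x \<partial>lborel) = 1"
  using norm1 unfolding set_lebesgue_integral_def kk_eq .

lemma kk_nonneg: "0 \<le> kk a"
  using bb[of a] by (auto simp: kk_def indicator_def)

lemma kk_le: "kk a \<le> M"
proof (cases "a > 0")
  case True
  have "exp (-\<mu>*a) \<le> 1" using True mu by (simp add: exp_le_one_iff)
  then have "\<beta> a * exp (-\<mu>*a) \<le> M * 1" using bb[OF True] M_nonneg by (intro mult_mono) auto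
  then show ?thesis using True by (simp add: kk_def)
next
  case False then show ?thesis using M_nonneg by (simp add: kk_def)
qed

lemma L1p_w:
  assumes "u0 \<in> L1p"
  shows "integrable lborel (\<lambda>x. indicator {0<..} x * \<bar>u0 x\<bar>)"
    and "L1norm u0 = (\<integral>x. indicator {0<..} x * \<bar>u0 x\<bar> \<partial>lborel)"
proof -
  have "integrable lborel (\<lambda>x. indicator {0<..} x *\<^sub>R u0 x)"
    using assms unfolding L1p_def set_integrable_def by auto
  then have "integrable lborel (\<lambda>x. \<bar>indicator {0<..} x *\<^sub>R u0 x\<bar>)" by (rule integrable_abs)
  moreover have "(\<lambda>x. \<bar>indicator {0<..} x *\<^sub>R u0 x\<bar>) = (\<lambda>x. indicator {0<..} x * \<bar>u0 x\<bar>)"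
    by (rule ext) (simp add: indicator_def)
  ultimately show "integrable lborel (\<lambda>x. indicator {0<..} x * \<bar>u0 x\<bar>)" by simp
  show "L1norm u0 = (\<integral>x. indicator {0<..} x * \<bar>u0 x\<bar> \<partial>lborel)"
    unfolding L1norm_def set_lebesgue_integral_def by simp
qed

lemma I1_bounds:
  assumes u0: "u0 \<in> L1p" and t: "0 \<le> t"
  shows "0 \<le> I1 u0 t" "I1 u0 t \<le> M * exp (-\<mu>*t) * L1norm u0"
proof -
  have u0nn: "\<And>a. a > 0 \<Longrightarrow> 0 \<le> u0 a" using u0 unfolding L1p_def by auto
  have I: "I1 u0 t = (\<integral>a. indicator {t<..} a * (\<beta> a * exp (- \<mu> * t) * u0 (a - t)) \<partial>lborel)"
    unfolding I1_def set_lebesgue_integral_def by simp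
  have pt: "0 \<le> indicator {t<..} a * (\<beta> a * exp (- \<mu> * t) * u0 (a - t))" for a
    using bb[of a] u0nn[of "a - t"] t by (auto simp: indicator_def)
  show "0 \<le> I1 u0 t" unfolding I by (rule integral_nonneg_AE) (use pt in auto)
  define w where "w x = indicator {0<..} x * \<bar>u0 x\<bar>" for x
  have wi: "integrable lborel w" using L1p_w(1)[OF u0] unfolding w_def .
  have wi2: "integrable lborel (\<lambda>a. M * exp (-\<mu>*t) * w (a + (-t)))"
    using shift_integrable[OF wi, of "-t"] by simp
  have "I1 u0 t \<le> (\<integral>a. M * exp (-\<mu>*t) * w (a + (-t)) \<partial>lborel)"
    unfolding I
  proof (rule integral_mono'[OF wi2])
    fix a :: real
    show "0 \<le> M * exp (-\<mu>*t) * w (a + (-t))" using M_nonneg by (simp add: w_def)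
    show "indicator {t<..} a * (\<beta> a * exp (- \<mu> * t) * u0 (a - t)) \<le> M * exp (-\<mu>*t) * w (a + (-t))"
    proof (cases "t < a")
      case True
      have "\<beta> a * exp (- \<mu> * t) * u0 (a - t) \<le> M * exp (- \<mu> * t) * u0 (a - t)"
        using bb[of a] True t u0nn[of "a - t"] by (intro mult_right_mono) auto
      then show ?thesis using True u0nn[of "a - t"] by (simp add: w_def)
    next
      case False then show ?thesis using M_nonneg by (simp add: w_def)
    qed
  qed
  also have "\<dots> = M * exp (-\<mu>*t) * (\<integral>a. w (a + (-t)) \<partial>lborel)" by simp
  also have "(\<integral>a. w (a + (-t)) \<partial>lborel) = L1norm u0"
    using shift_integral[of w "-t"] L1p_w(2)[OF u0] unfolding w_def by simp
  finally show "I1 u0 t \<le> M * exp (-\<mu>*t) * L1norm u0" .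
qed

definition sol :: "(real \<Rightarrow> real) \<Rightarrow> (real \<Rightarrow> real) \<Rightarrow> bool" where
  "sol u0 b \<longleftrightarrow> continuous_on {0..} b \<and> (\<forall>t\<ge>0. b t = \<alpha> * fnl (I1 u0 t + J b t))"

lemma b_le: "sol u0 b \<Longrightarrow> 0 \<le> t \<Longrightarrow> b t \<le> \<alpha>"
  unfolding sol_def using fnl_le1 al by (simp add: mult_left_le)

lemma J_rep: "J b s = (\<integral>a. kk a * (indicator {0<..} (s - a) * b (s - a)) \<partial>lborel)"
proof -
  have "(\<lambda>a. indicator {0<..<s} a *\<^sub>R (\<beta> a * exp (- \<mu> * a) * b (s - a))) =
        (\<lambda>a. kk a * (indicator {0<..} (s - a) * b (s - a)))"
    by (rule ext) (simp add: kk_def indicator_def)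
  then show ?thesis unfolding J_def set_lebesgue_integral_def by simp
qed

lemma J_zero: "J b 0 = 0"
  unfolding J_def set_lebesgue_integral_def by simp

lemma b_nonneg:
  assumes u0: "u0 \<in> L1p" and s: "sol u0 b" and T: "0 \<le> T"
  shows "0 \<le> b T"
proof -
  have bc: "continuous_on {0..} b" and beq: "\<And>t. 0 \<le> t \<Longrightarrow> b t = \<alpha> * fnl (I1 u0 t + J b t)"
    using s unfolding sol_def by auto
  have bcT: "continuous_on {0..T} b" by (rule continuous_on_subset[OF bc]) auto
  obtain tm where tm: "tm \<in> {0..T}" "\<And>y. y \<in> {0..T} \<Longrightarrow> \<bar>b y\<bar> \<le> \<bar>b tm\<bar>"
  proof -
    have "continuous_on {0..T} (\<lambda>y. \<bar>b y\<bar>)" using bcT by (intro continuous_intros)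
    then show ?thesis using continuous_attains_sup[of "{0..T}" "\<lambda>y. \<bar>b y\<bar>"] T that by auto
  qed
  define Bd where "Bd = \<bar>b tm\<bar>"
  have Bd: "\<And>y. y \<in> {0..T} \<Longrightarrow> \<bar>b y\<bar> \<le> Bd" "0 \<le> Bd" using tm by (auto simp: Bd_def)
  define \<delta> where "\<delta> = min 1 (1 / (2 * (\<alpha> * M + 1) * exp (M * Bd)))"
  have aM: "0 \<le> \<alpha> * M" using al M_nonneg by simp
  have d0: "0 < \<delta>" "\<delta> \<le> 1" using aM by (auto simp: \<delta>_def)
  have dkey: "\<alpha> * M * \<delta> * exp (M * Bd) \<le> 1/2"
  proof -
    have "\<delta> \<le> 1 / (2 * (\<alpha> * M + 1) * exp (M * Bd))" by (simp add: \<delta>_def)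
    then have "\<alpha> * M * \<delta> * exp (M * Bd) \<le> \<alpha> * M * (1 / (2 * (\<alpha> * M + 1) * exp (M * Bd))) * exp (M * Bd)"
      using aM by (intro mult_right_mono mult_left_mono) auto
    also have "\<dots> = \<alpha> * M / (2 * (\<alpha> * M + 1))" by simp
    also have "\<dots> \<le> 1/2" using aM by (simp add: field_simps)
    finally show ?thesis .
  qed
  have P: "\<forall>s\<in>{0..T}. s \<le> real n * \<delta> \<longrightarrow> 0 \<le> b s" for n
  proof (induction n)
    case 0
    show ?case
    proof (intro ballI impI)
      fix s assume "s \<in> {0..T}" "s \<le> real 0 * \<delta>"
      then have "s = 0" by auto
      then show "0 \<le> b s" using beq[of 0] I1_bounds(1)[OF u0, of 0] al
        by (simp add: J_zero fnl_nonneg)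
    qed
  next
    case (Suc n)
    define T' where "T' = min T (real (Suc n) * \<delta>)"
    have T'0: "0 \<le> T'" using T d0 by (simp add: T'_def)
    have ST: "{0..T'} \<subseteq> {0..T}" by (auto simp: T'_def)
    have "continuous_on {0..T'} b" by (rule continuous_on_subset[OF bc]) auto
    then have "continuous_on {0..T'} (\<lambda>y. max 0 (- b y))" by (intro continuous_intros)
    then obtain t1 where t1: "t1 \<in> {0..T'}" "\<And>y. y \<in> {0..T'} \<Longrightarrow> max 0 (- b y) \<le> max 0 (- b t1)"
      using continuous_attains_sup[of "{0..T'}" "\<lambda>y. max 0 (- b y)"] T'0 by auto
    define m where "m = max 0 (- b t1)"
    have all: "0 \<le> b y" if y: "y \<in> {0..T'}" for y
    proof (rule ccontr)
      assume "\<not> 0 \<le> b y"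
      then have mpos: "0 < m" using t1(2)[OF y] by (simp add: m_def)
      then have bt1: "b t1 = - m" by (simp add: m_def max_def split: if_splits)
      have t1T: "t1 \<in> {0..T}" using t1(1) ST by auto
      have mBd: "m \<le> Bd" using Bd(1)[OF t1T] bt1 mpos by simp
      have bnd: "- (kk a * (indicator {0<..} (t1 - a) * b (t1 - a))) \<le> M * m * indicator {0<..<\<delta>} a" for a
      proof (cases "0 < a \<and> 0 < t1 - a")
        case True
        have r: "t1 - a \<in> {0..T'}" using True t1(1) by auto
        show ?thesis
        proof (cases "t1 - a \<le> real n * \<delta>")
          case True2: True
          have "0 \<le> b (t1 - a)" using Suc.IH r ST True2 by auto
          then have "0 \<le> kk a * (indicator {0<..} (t1 - a) * b (t1 - a))"
            using kk_nonneg[of a] by simp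
          moreover have "0 \<le> M * m * indicator {0<..<\<delta>} a" using M_nonneg mpos by (simp add: indicator_def)
          ultimately show ?thesis by linarith
        next
          case False2: False
          have "t1 \<le> real (Suc n) * \<delta>" using t1(1) by (simp add: T'_def)
          then have "a < \<delta>" using False2 by (simp add: algebra_simps)
          then have ind: "indicator {0<..<\<delta>} a = (1::real)" using True by simp
          have "- b (t1 - a) \<le> m" using t1(2)[OF r] by (simp add: m_def)
          then have "kk a * (- b (t1 - a)) \<le> kk a * m"
            using kk_nonneg[of a] by (intro mult_left_mono) auto
          also have "\<dots> \<le> M * m" using kk_le[of a] mpos by (intro mult_right_mono) auto
          finally have "kk a * (- b (t1 - a)) \<le> M * m" .
          then show ?thesis using True ind by simp
        qed
      next
        case False
        then have "kk a * (indicator {0<..} (t1 - a) * b (t1 - a)) = 0"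
          by (auto simp: kk_def indicator_def)
        moreover have "0 \<le> M * m * indicator {0<..<\<delta>} a" using M_nonneg mpos by (simp add: indicator_def)
        ultimately show ?thesis by linarith
      qed
      have "- J b t1 = (\<integral>a. - (kk a * (indicator {0<..} (t1 - a) * b (t1 - a))) \<partial>lborel)"
        unfolding J_rep by simp
      also have "\<dots> \<le> (\<integral>a. M * m * indicator {0<..<\<delta>} a \<partial>lborel)"
        by (rule integral_mono') (use bnd M_nonneg mpos d0 in auto)
      also have "\<dots> = M * m * \<delta>" using d0 by simp
      finally have Jlow: "- (M * m * \<delta>) \<le> J b t1" by simp
      define x where "x = I1 u0 t1 + J b t1"
      have xlow: "- (M * m * \<delta>) \<le> x" using Jlow I1_bounds(1)[OF u0, of t1] t1(1) by (simp add: x_def)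
      have bt1x: "b t1 = \<alpha> * fnl x" using beq[of t1] t1(1) by (simp add: x_def)
      show False
      proof (cases "0 \<le> x")
        case True
        have "0 \<le> \<alpha> * fnl x" using al fnl_nonneg[OF True] by simp
        then show False using bt1x bt1 mpos by simp
      next
        case False
        have "x * exp (M * m * \<delta>) \<le> fnl x" using fnl_lower[of x "M * m * \<delta>"] False xlow by simp
        moreover have "- (M * m * \<delta>) * exp (M * m * \<delta>) \<le> x * exp (M * m * \<delta>)"
          using xlow by (intro mult_right_mono) auto
        ultimately have "- (M * m * \<delta>) * exp (M * m * \<delta>) \<le> fnl x" by linarith
        then have "\<alpha> * (- (M * m * \<delta>) * exp (M * m * \<delta>)) \<le> \<alpha> * fnl x"
          using al by (intro mult_left_mono) auto
        then have mle: "m \<le> \<alpha> * M * \<delta> * exp (M * m * \<delta>) * m"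
          using bt1x bt1 by (simp add: algebra_simps)
        have "M * m * \<delta> \<le> M * Bd"
        proof -
          have "m * \<delta> \<le> Bd * 1" using mBd d0 mpos by (intro mult_mono) auto
          then show ?thesis using M_nonneg by (simp add: mult.assoc mult_left_mono)
        qed
        then have "exp (M * m * \<delta>) \<le> exp (M * Bd)" by simp
        then have "\<alpha> * M * \<delta> * exp (M * m * \<delta>) \<le> \<alpha> * M * \<delta> * exp (M * Bd)"
          using aM d0 by (intro mult_left_mono) auto
        then have "\<alpha> * M * \<delta> * exp (M * m * \<delta>) \<le> 1/2" using dkey by linarith
        then have "\<alpha> * M * \<delta> * exp (M * m * \<delta>) * m \<le> 1/2 * m" using mpos by (intro mult_right_mono) auto
        then show False using mle mpos by linarith
      qed
    qed
    show ?case
    proof (intro ballI impI)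
      fix s assume "s \<in> {0..T}" "s \<le> real (Suc n) * \<delta>"
      then have "s \<in> {0..T'}" by (auto simp: T'_def)
      then show "0 \<le> b s" by (rule all)
    qed
  qed
  obtain n :: nat where "T / \<delta> \<le> n" using real_arch_simple by blast
  then have "T \<le> real n * \<delta>" using d0 by (simp add: field_simps)
  then show ?thesis using P[of n] T by auto
qed

lemma J_mod:
  assumes u0: "u0 \<in> L1p" and sb: "sol u0 b" and s: "0 \<le> s"
  shows "\<bar>J b s' - J b s\<bar> \<le> \<alpha> * (\<integral>x. \<bar>kk (x + (s' - s)) - kk x\<bar> \<partial>lborel)"
proof -
  define d where "d = s' - s"
  define bb where "bb x = indicator {0<..} x * b x" for x
  have bc: "continuous_on {0..} b" using sb unfolding sol_def by auto
  have bbm[measurable]: "bb \<in> borel_measurable lborel"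
  proof -
    have "(\<lambda>x. indicator {0<..} x *\<^sub>R b x) \<in> borel_measurable borel"
      by (rule borel_measurable_continuous_on_indicator) (auto intro: continuous_on_subset[OF bc])
    then show ?thesis by (simp add: bb_def[abs_def])
  qed
  have bbb: "\<bar>bb x\<bar> \<le> \<alpha>" for x
    using b_le[OF sb, of x] b_nonneg[OF u0 sb, of x] al by (auto simp: bb_def indicator_def)
  have kki: "integrable lborel kk" by (rule kk_int)
  have kkdi: "integrable lborel (\<lambda>x. kk (x + d))" by (rule shift_integrable[OF kki])
  have F1i: "integrable lborel (\<lambda>x. kk (x + d) * bb (s - x))"
  proof (rule Bochner_Integration.integrable_bound[where f="\<lambda>x. \<alpha> * kk (x + d)"])
    show "integrable lborel (\<lambda>x. \<alpha> * kk (x + d))" using kkdi by simp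
    show "(\<lambda>x. kk (x + d) * bb (s - x)) \<in> borel_measurable lborel" by measurable
    show "AE x in lborel. norm (kk (x + d) * bb (s - x)) \<le> norm (\<alpha> * kk (x + d))"
    proof (rule AE_I2)
      fix x
      have "\<bar>kk (x + d)\<bar> * \<bar>bb (s - x)\<bar> \<le> \<bar>kk (x + d)\<bar> * \<alpha>" using bbb by (intro mult_left_mono) auto
      then show "norm (kk (x + d) * bb (s - x)) \<le> norm (\<alpha> * kk (x + d))"
        using al by (simp add: abs_mult mult.commute)
    qed
  qed
  have F2i: "integrable lborel (\<lambda>x. kk x * bb (s - x))"
  proof (rule Bochner_Integration.integrable_bound[where f="\<lambda>x. \<alpha> * kk x"])
    show "integrable lborel (\<lambda>x. \<alpha> * kk x)" using kki by simp
    show "(\<lambda>x. kk x * bb (s - x)) \<in> borel_measurable lborel" by measurable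
    show "AE x in lborel. norm (kk x * bb (s - x)) \<le> norm (\<alpha> * kk x)"
    proof (rule AE_I2)
      fix x
      have "\<bar>kk x\<bar> * \<bar>bb (s - x)\<bar> \<le> \<bar>kk x\<bar> * \<alpha>" using bbb by (intro mult_left_mono) auto
      then show "norm (kk x * bb (s - x)) \<le> norm (\<alpha> * kk x)"
        using al by (simp add: abs_mult mult.commute)
    qed
  qed
  have Js': "J b s' = (\<integral>x. kk (x + d) * bb (s - x) \<partial>lborel)"
  proof -
    have "J b s' = (\<integral>a. kk a * bb (s' - a) \<partial>lborel)" unfolding J_rep bb_def ..
    also have "\<dots> = (\<integral>x. kk (x + d) * bb (s' - (x + d)) \<partial>lborel)"
      using shift_integral[of "\<lambda>a. kk a * bb (s' - a)" d] by simp
    also have "\<dots> = (\<integral>x. kk (x + d) * bb (s - x) \<partial>lborel)" by (simp add: d_def algebra_simps)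
    finally show ?thesis .
  qed
  have Js: "J b s = (\<integral>x. kk x * bb (s - x) \<partial>lborel)" unfolding J_rep bb_def ..
  have "J b s' - J b s = (\<integral>x. kk (x + d) * bb (s - x) - kk x * bb (s - x) \<partial>lborel)"
    unfolding Js' Js using F1i F2i by simp
  then have "\<bar>J b s' - J b s\<bar> \<le> (\<integral>x. \<bar>kk (x + d) * bb (s - x) - kk x * bb (s - x)\<bar> \<partial>lborel)"
    using integral_abs_bound by metis
  also have "\<dots> \<le> (\<integral>x. \<alpha> * \<bar>kk (x + d) - kk x\<bar> \<partial>lborel)"
  proof (rule integral_mono')
    show "integrable lborel (\<lambda>x. \<alpha> * \<bar>kk (x + d) - kk x\<bar>)"
      using kkdi kki by (intro integrable_mult_right integrable_abs Bochner_Integration.integrable_diff)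
    fix x
    show "0 \<le> \<alpha> * \<bar>kk (x + d) - kk x\<bar>" using al by simp
    have "\<bar>kk (x + d) * bb (s - x) - kk x * bb (s - x)\<bar> = \<bar>kk (x + d) - kk x\<bar> * \<bar>bb (s - x)\<bar>"
      by (simp add: left_diff_distrib[symmetric] abs_mult)
    also have "\<dots> \<le> \<bar>kk (x + d) - kk x\<bar> * \<alpha>" using bbb by (intro mult_left_mono) auto
    finally show "\<bar>kk (x + d) * bb (s - x) - kk x * bb (s - x)\<bar> \<le> \<alpha> * \<bar>kk (x + d) - kk x\<bar>"
      by (simp add: mult.commute)
  qed
  also have "\<dots> = \<alpha> * (\<integral>x. \<bar>kk (x + (s' - s)) - kk x\<bar> \<partial>lborel)" by (simp add: d_def)
  finally show ?thesis .
qed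

end

context model
begin

lemma J_bounds:
  assumes u0: "u0 \<in> L1p" and sb: "sol u0 b"
  shows "0 \<le> J b s" "J b s \<le> \<alpha>"
proof -
  have pt: "0 \<le> kk a * (indicator {0<..} (s - a) * b (s - a)) \<and>
            kk a * (indicator {0<..} (s - a) * b (s - a)) \<le> kk a * \<alpha>" for a
  proof (cases "0 < s - a")
    case True
    have "0 \<le> b (s - a)" "b (s - a) \<le> \<alpha>" using b_nonneg[OF u0 sb] b_le[OF sb] True by auto
    then show ?thesis using True kk_nonneg[of a] by (auto intro: mult_left_mono)
  next
    case False then show ?thesis using kk_nonneg[of a] al by simp
  qed
  show "0 \<le> J b s" unfolding J_rep by (rule integral_nonneg_AE) (use pt in auto)
  have "J b s \<le> (\<integral>a. kk a * \<alpha> \<partial>lborel)" unfolding J_rep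
    by (rule integral_mono') (use pt kk_int kk_nonneg al in auto)
  also have "\<dots> = \<alpha>" using kk_integral by simp
  finally show "J b s \<le> \<alpha>" .
qed

lemma near_bound:
  assumes u0: "u0 \<in> L1p" and sb: "sol u0 b" and R: "L1norm u0 \<le> R"
    and a: "0 < a" "a < A" and tA: "A \<le> t"
    and c0: "exp (-\<mu>*(t-A)) \<le> c0"
    and j: "real j * h \<le> a" "a < real j * h + h"
    and d: "\<And>hh. \<bar>hh\<bar> < \<delta> \<Longrightarrow> (\<integral>x. \<bar>kk (x + hh) - kk x\<bar> \<partial>lborel) < \<eta>1"
    and hd: "h \<le> \<delta>" and eta: "0 < \<eta>"
  shows "\<bar>exp (-\<mu>*a) * b (t-a) - exp (-\<mu>*a) * \<alpha> * fnl (\<eta> * real (nat \<lfloor>J b (t - real j * h) / \<eta>\<rfloor>))\<bar>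
         \<le> \<alpha> * (M * c0 * R + \<alpha> * \<eta>1 + \<eta>)"
proof -
  define s where "s = t - real j * h"
  define x where "x = I1 u0 (t - a) + J b (t - a)"
  define y where "y = \<eta> * real (nat \<lfloor>J b s / \<eta>\<rfloor>)"
  have ta: "0 \<le> t - a" using a tA by simp
  have s0: "0 \<le> s" using j a tA by (simp add: s_def)
  have bx: "b (t - a) = \<alpha> * fnl x" using sb ta unfolding sol_def x_def by auto
  have x0: "0 \<le> x" using I1_bounds(1)[OF u0 ta] J_bounds(1)[OF u0 sb] by (simp add: x_def)
  have y0: "0 \<le> y" using eta by (simp add: y_def)
  have Js0: "0 \<le> J b s" by (rule J_bounds(1)[OF u0 sb])
  have "\<bar>exp (-\<mu>*a) * b (t-a) - exp (-\<mu>*a) * \<alpha> * fnl y\<bar> = exp (-\<mu>*a) * \<alpha> * \<bar>fnl x - fnl y\<bar>"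
    using al by (simp add: bx right_diff_distrib[symmetric] abs_mult mult.assoc)
  also have "\<dots> \<le> 1 * \<alpha> * \<bar>x - y\<bar>"
  proof -
    have "exp (-\<mu>*a) \<le> 1" using a mu by (simp add: exp_le_one_iff)
    then show ?thesis using fnl_lip[OF x0 y0] al by (intro mult_mono) auto
  qed
  also have "\<bar>x - y\<bar> \<le> M * c0 * R + \<alpha> * \<eta>1 + \<eta>"
  proof -
    have L0: "0 \<le> L1norm u0" unfolding L1p_w(2)[OF u0] by (rule integral_nonneg_AE) auto
    have "exp (-\<mu>*(t-a)) \<le> exp (-\<mu>*(t-A))" using a mu by simp
    then have ec: "exp (-\<mu>*(t-a)) \<le> c0" using c0 by linarith
    have "I1 u0 (t - a) \<le> M * exp (-\<mu>*(t-a)) * L1norm u0" by (rule I1_bounds(2)[OF u0 ta])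
    also have "\<dots> \<le> M * c0 * R"
    proof -
      have c00: "0 \<le> c0" using ec exp_ge_zero[of "-\<mu>*(t-a)"] by linarith
      show ?thesis using M_nonneg L0 ec R c00 by (intro mult_mono) auto
    qed
    finally have i1: "I1 u0 (t - a) \<le> M * c0 * R" .
    have i1n: "0 \<le> I1 u0 (t - a)" by (rule I1_bounds(1)[OF u0 ta])
    have "\<bar>J b (t - a) - J b s\<bar> \<le> \<alpha> * (\<integral>x. \<bar>kk (x + ((t - a) - s)) - kk x\<bar> \<partial>lborel)"
      by (rule J_mod[OF u0 sb s0])
    also have "\<dots> \<le> \<alpha> * \<eta>1"
    proof -
      have "\<bar>(t - a) - s\<bar> < \<delta>" using j hd by (simp add: s_def)
      from d[OF this] show ?thesis using al by (intro mult_left_mono) auto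
    qed
    finally have i2: "\<bar>J b (t - a) - J b s\<bar> \<le> \<alpha> * \<eta>1" .
    have fl: "real_of_int \<lfloor>J b s / \<eta>\<rfloor> \<le> J b s / \<eta>" "J b s / \<eta> < real_of_int \<lfloor>J b s / \<eta>\<rfloor> + 1"
      by linarith+
    have fl0: "0 \<le> \<lfloor>J b s / \<eta>\<rfloor>" using Js0 eta by simp
    have yeq: "y = \<eta> * real_of_int \<lfloor>J b s / \<eta>\<rfloor>" using fl0 by (simp add: y_def)
    then have i3: "\<bar>J b s - y\<bar> \<le> \<eta>"
    proof -
      have f1: "\<eta> * real_of_int \<lfloor>J b s / \<eta>\<rfloor> \<le> J b s" using mult_left_mono[OF fl(1), of \<eta>] eta by simp
      have f2: "J b s < \<eta> * real_of_int \<lfloor>J b s / \<eta>\<rfloor> + \<eta>" using mult_strict_left_mono[OF fl(2), of \<eta>] eta by (simp add: distrib_left)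
      show ?thesis using f1 f2 yeq by (simp add: abs_le_iff)
    qed
    show ?thesis using i1 i1n i2 i3 unfolding x_def by linarith
  qed
  then have "1 * \<alpha> * \<bar>x - y\<bar> \<le> \<alpha> * (M * c0 * R + \<alpha> * \<eta>1 + \<eta>)" using al by simp
  finally show ?thesis unfolding y_def s_def .
qed

definition cen :: "real \<Rightarrow> real \<Rightarrow> real \<Rightarrow> (nat \<Rightarrow> nat) \<Rightarrow> real \<Rightarrow> real" where
  "cen A h \<eta> v a = indicator {0<..<A} a * exp (-\<mu>*a) * \<alpha> * fnl (\<eta> * real (v (nat \<lfloor>a / h\<rfloor>)))"

lemma cen_L1p:
  assumes "0 \<le> \<eta>" "0 \<le> A"
  shows "cen A h \<eta> v \<in> L1p"
proof -
  have nn: "0 \<le> cen A h \<eta> v a" for a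
    using assms al fnl_nonneg[of "\<eta> * real (v (nat \<lfloor>a / h\<rfloor>))"] by (simp add: cen_def)
  have le: "cen A h \<eta> v a \<le> \<alpha> * indicator {0<..<A} a" for a
  proof (cases "a \<in> {0<..<A}")
    case True
    have e1: "exp (-\<mu>*a) \<le> 1" using True mu by (simp add: exp_le_one_iff)
    have f1: "fnl (\<eta> * real (v (nat \<lfloor>a / h\<rfloor>))) \<le> 1" by (rule fnl_le1)
    have f0: "0 \<le> fnl (\<eta> * real (v (nat \<lfloor>a / h\<rfloor>)))" using assms by (intro fnl_nonneg) auto
    have "exp (-\<mu>*a) * \<alpha> * fnl (\<eta> * real (v (nat \<lfloor>a / h\<rfloor>))) \<le> 1 * \<alpha> * 1"
      using e1 f1 f0 al by (intro mult_mono) auto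
    then show ?thesis using True by (simp add: cen_def)
  next
    case False then show ?thesis by (simp add: cen_def)
  qed
  have m: "cen A h \<eta> v \<in> borel_measurable lborel" unfolding cen_def[abs_def] by measurable
  have "integrable lborel (\<lambda>x. indicator {0<..} x *\<^sub>R cen A h \<eta> v x)"
  proof (rule Bochner_Integration.integrable_bound[where f="\<lambda>a. \<alpha> * indicator {0<..<A} a"])
    show "integrable lborel (\<lambda>a. \<alpha> * indicator {0<..<A} a :: real)"
      using assms by (intro integrable_mult_right integrable_real_indicator) auto
    show "(\<lambda>x. indicator {0<..} x *\<^sub>R cen A h \<eta> v x) \<in> borel_measurable lborel" using m by measurable
    show "AE x in lborel. norm (indicator {0<..} x *\<^sub>R cen A h \<eta> v x) \<le> norm (\<alpha> * indicator {0<..<A} x :: real)"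
    proof (rule AE_I2)
      fix x
      have "\<bar>indicator {0<..} x * cen A h \<eta> v x\<bar> \<le> \<alpha> * indicator {0<..<A} x"
        using nn[of x] le[of x] by (auto simp: indicator_def)
      then show "norm (indicator {0<..} x *\<^sub>R cen A h \<eta> v x) \<le> norm (\<alpha> * indicator {0<..<A} x :: real)"
        using al by simp
    qed
  qed
  then show ?thesis using nn unfolding L1p_def set_integrable_def by auto
qed

lemma dist_bound:
  assumes u0: "u0 \<in> L1p" and sb: "sol u0 b" and R: "L1norm u0 \<le> R"
    and Ueq: "\<And>a. a > 0 \<Longrightarrow> Ut a = (if t \<le> a then exp (-\<mu>*t) * u0 (a-t) else exp (-\<mu>*a) * b (t-a))"
    and A: "0 < A" "A < t" and c0: "exp (-\<mu>*(t-A)) \<le> c0"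
    and h: "0 < h" and N: "A \<le> real N * h"
    and d: "\<And>hh. \<bar>hh\<bar> < \<delta> \<Longrightarrow> (\<integral>x. \<bar>kk (x + hh) - kk x\<bar> \<partial>lborel) < \<eta>1"
    and hd: "h \<le> \<delta>" and eta: "0 < \<eta>"
    and v: "\<And>j. j < N \<Longrightarrow> v j = nat \<lfloor>J b (t - real j * h) / \<eta>\<rfloor>"
  shows "L1dist Ut (cen A h \<eta> v) \<le> exp (-\<mu>*t) * R + \<alpha> * (exp (-\<mu>*A) / \<mu>) + \<alpha> * (M * c0 * R + \<alpha> * \<eta>1 + \<eta>) * A"
proof -
  define D where "D = \<alpha> * (M * c0 * R + \<alpha> * \<eta>1 + \<eta>)"
  define w where "w x = indicator {0<..} x * \<bar>u0 x\<bar>" for x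
  have u0nn: "\<And>a. a > 0 \<Longrightarrow> 0 \<le> u0 a" using u0 unfolding L1p_def by auto
  have wi: "integrable lborel w" using L1p_w(1)[OF u0] unfolding w_def .
  have w0: "0 \<le> w x" for x by (simp add: w_def)
  have L0: "0 \<le> L1norm u0" unfolding L1p_w(2)[OF u0] by (rule integral_nonneg_AE) auto
  have c00: "0 \<le> c0" using c0 exp_ge_zero[of "-\<mu>*(t-A)"] by linarith
  have R0: "0 \<le> R" using L0 R by linarith
  have D0: "0 \<le> D" unfolding D_def
  proof -
    have "0 \<le> M * c0 * R" using M_nonneg c00 R0 by simp
    moreover have "0 \<le> \<alpha> * \<eta>1"
    proof -
      have "0 \<le> (\<integral>x. \<bar>kk (x + 0) - kk x\<bar> \<partial>lborel)" by simp
      then have "0 < \<eta>1" using d[of 0] h hd by simp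
      then show ?thesis using al by simp
    qed
    ultimately show "0 \<le> \<alpha> * (M * c0 * R + \<alpha> * \<eta>1 + \<eta>)" using al eta by simp
  qed
  define G where "G a = exp (-\<mu>*t) * w (a + (-t)) + \<alpha> * (indicator {A..} a *\<^sub>R exp (-\<mu>*a)) + D * indicator {0<..<A} a" for a
  have ei: "integrable lborel (\<lambda>a. indicator {A..} a *\<^sub>R exp (-\<mu>*a))"
    using exp_tail(1)[OF mu, of A] unfolding set_integrable_def .
  have wsi: "integrable lborel (\<lambda>a. w (a + (-t)))" by (rule shift_integrable[OF wi])
  have ii: "integrable lborel (\<lambda>a. indicator {0<..<A} a :: real)"
    using A by (intro integrable_real_indicator) auto
  have Gi: "integrable lborel G" unfolding G_def
    using wsi ei ii by (intro Bochner_Integration.integrable_add integrable_mult_right)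
  have intG: "(\<integral>a. G a \<partial>lborel) = exp (-\<mu>*t) * L1norm u0 + \<alpha> * (exp (-\<mu>*A) / \<mu>) + D * A"
  proof -
    have "(\<integral>a. G a \<partial>lborel) = exp (-\<mu>*t) * (\<integral>a. w (a + (-t)) \<partial>lborel)
        + \<alpha> * (\<integral>a. indicator {A..} a *\<^sub>R exp (-\<mu>*a) \<partial>lborel) + D * (\<integral>a. indicator {0<..<A} a \<partial>lborel)"
      unfolding G_def using wsi ei ii by (simp add: Bochner_Integration.integral_add integrable_mult_right)
    also have "(\<integral>a. w (a + (-t)) \<partial>lborel) = L1norm u0"
      using shift_integral[of w "-t"] L1p_w(2)[OF u0] unfolding w_def by simp
    also have "(\<integral>a. indicator {A..} a *\<^sub>R exp (-\<mu>*a) \<partial>lborel) = exp (-\<mu>*A) / \<mu>"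
      using exp_tail(2)[OF mu, of A] unfolding set_lebesgue_integral_def .
    also have "(\<integral>a. indicator {0<..<A} a \<partial>lborel) = A" using A by simp
    finally show ?thesis .
  qed
  have G0: "0 \<le> G a" for a
    unfolding G_def using w0 D0 al by (intro add_nonneg_nonneg mult_nonneg_nonneg) auto
  have pw: "indicator {0<..} a *\<^sub>R \<bar>Ut a - cen A h \<eta> v a\<bar> \<le> G a" if at: "a \<noteq> t" for a
  proof (cases "0 < a")
    case False then show ?thesis using G0[of a] by simp
  next
    case a0: True
    show ?thesis
    proof (cases "a < A")
      case True
      define j where "j = nat \<lfloor>a / h\<rfloor>"
      have fl0: "0 \<le> \<lfloor>a / h\<rfloor>" using a0 h by simp
      have rj: "real j = real_of_int \<lfloor>a / h\<rfloor>" using fl0 by (simp add: j_def)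
      have j1: "real j * h \<le> a"
      proof -
        have "real j \<le> a / h" using rj by linarith
        then show ?thesis using h by (simp add: field_simps)
      qed
      have j2: "a < real j * h + h"
      proof -
        have "a / h < real j + 1" using rj by linarith
        then show ?thesis using h by (simp add: field_simps)
      qed
      have jN: "j < N"
      proof -
        have "real j * h < real N * h" using j1 True N by linarith
        then show ?thesis using h by simp
      qed
      have Ua: "Ut a = exp (-\<mu>*a) * b (t-a)" using Ueq[OF a0] True A by simp
      have ca: "cen A h \<eta> v a = exp (-\<mu>*a) * \<alpha> * fnl (\<eta> * real (nat \<lfloor>J b (t - real j * h) / \<eta>\<rfloor>))"
        using True a0 v[OF jN] by (simp add: cen_def j_def)
      have "\<bar>Ut a - cen A h \<eta> v a\<bar> \<le> D"
        unfolding Ua ca D_def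
        by (rule near_bound[OF u0 sb R a0 True _ c0 j1 j2 d hd eta]) (use A in simp)
      moreover have "D \<le> G a"
      proof -
        have "0 \<le> exp (-\<mu>*t) * w (a + (-t)) + \<alpha> * (indicator {A..} a *\<^sub>R exp (-\<mu>*a))"
          using w0 al by (intro add_nonneg_nonneg mult_nonneg_nonneg) auto
        then show ?thesis using True a0 by (simp add: G_def)
      qed
      ultimately show ?thesis using a0 by simp
    next
      case False
      have ca: "cen A h \<eta> v a = 0" using False by (simp add: cen_def)
      show ?thesis
      proof (cases "a < t")
        case True
        have Ua: "Ut a = exp (-\<mu>*a) * b (t-a)" using Ueq[OF a0] True by simp
        have "\<bar>Ut a\<bar> \<le> \<alpha> * exp (-\<mu>*a)"
          using b_nonneg[OF u0 sb, of "t-a"] b_le[OF sb, of "t-a"] True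
          by (simp add: Ua abs_mult mult.commute)
        moreover have "\<alpha> * exp (-\<mu>*a) \<le> G a"
        proof -
          have "0 \<le> exp (-\<mu>*t) * w (a + (-t))" using w0 by simp
          then show ?thesis using False D0 by (simp add: G_def)
        qed
        ultimately show ?thesis using a0 ca by simp
      next
        case False2: False
        then have ta: "t < a" using at by simp
        have Ua: "Ut a = exp (-\<mu>*t) * u0 (a-t)" using Ueq[OF a0] ta by simp
        have "\<bar>Ut a\<bar> = exp (-\<mu>*t) * w (a + (-t))"
          using u0nn[of "a-t"] ta by (simp add: Ua w_def abs_mult)
        moreover have "exp (-\<mu>*t) * w (a + (-t)) \<le> G a"
          using False D0 al by (simp add: G_def)
        ultimately show ?thesis using a0 ca by simp
      qed
    qed
  qed
  have "L1dist Ut (cen A h \<eta> v) \<le> (\<integral>a. G a \<partial>lborel)"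
    unfolding L1dist_def set_lebesgue_integral_def
  proof (rule integral_mono_AE'[OF Gi])
    show "AE a in lborel. indicator {0<..} a *\<^sub>R \<bar>Ut a - cen A h \<eta> v a\<bar> \<le> G a"
      using AE_lborel_singleton[of t] by eventually_elim (use pw in auto)
    show "AE a in lborel. 0 \<le> G a" using G0 by auto
  qed
  also have "\<dots> \<le> exp (-\<mu>*t) * R + \<alpha> * (exp (-\<mu>*A) / \<mu>) + D * A"
    unfolding intG using R by simp
  finally show ?thesis unfolding D_def .
qed

end

context model
begin

lemma main_cover:
  assumes U: "is_semiflow \<mu> \<alpha> \<beta> U" and BL: "B \<subseteq> L1p" and BR: "\<And>u. u \<in> B \<Longrightarrow> L1norm u \<le> R"
    and r: "0 < r"
  shows "\<exists>T. \<forall>t\<ge>T. kuratowski (U t ` B) \<le> ereal r"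
proof -
  define R0 where "R0 = max R 0"
  have BR0: "\<And>u. u \<in> B \<Longrightarrow> L1norm u \<le> R0" using BR by (force simp: R0_def)
  have R00: "0 \<le> R0" by (simp add: R0_def)
  define q where "q = 4 * \<alpha> / (\<mu> * r)"
  have q0: "0 < q" using al mu r by (simp add: q_def)
  define A where "A = max 1 (ln q / \<mu>)"
  have A1: "1 \<le> A" by (simp add: A_def)
  have A0: "0 < A" using A1 by simp
  have eA: "\<alpha> * (exp (-\<mu>*A) / \<mu>) \<le> r / 4"
  proof -
    have "ln q / \<mu> \<le> A" by (simp add: A_def)
    then have "ln q \<le> \<mu> * A" using mu by (simp add: pos_divide_le_eq mult.commute)
    then have "exp (-\<mu>*A) \<le> exp (- ln q)" by simp
    also have "\<dots> = 1 / q" using q0 by (simp add: exp_minus inverse_eq_divide)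
    finally have "exp (-\<mu>*A) \<le> 1 / q" .
    then have "\<alpha> * (exp (-\<mu>*A) / \<mu>) \<le> \<alpha> * ((1 / q) / \<mu>)"
      using al mu by (intro mult_left_mono divide_right_mono) auto
    also have "\<dots> = r / 4" using al mu r by (simp add: q_def field_simps)
    finally show ?thesis .
  qed
  define \<eta>1 where "\<eta>1 = r / (8 * \<alpha> * \<alpha> * A)"
  have eta10: "0 < \<eta>1" using r al A0 by (simp add: \<eta>1_def)
  obtain \<delta> where d0: "0 < \<delta>" and d: "\<And>hh. \<bar>hh\<bar> < \<delta> \<Longrightarrow> (\<integral>x. \<bar>kk (x + hh) - kk x\<bar> \<partial>lborel) < \<eta>1"
    using TC_integrable[OF kk_int] eta10 unfolding TC_def by blast
  define N :: nat where "N = nat \<lceil>A / \<delta>\<rceil> + 1"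
  have N0: "0 < real N" by (simp add: N_def)
  have NAd: "A / \<delta> \<le> real N" unfolding N_def by linarith
  define h where "h = A / real N"
  have h0: "0 < h" using A0 N0 by (simp add: h_def)
  have hN: "A \<le> real N * h" using N0 by (simp add: h_def)
  have hd: "h \<le> \<delta>" using NAd d0 N0 by (simp add: h_def field_simps)
  define \<eta> where "\<eta> = r / (8 * \<alpha> * A)"
  have eta0: "0 < \<eta>" using r al A0 by (simp add: \<eta>_def)
  define P where "P = nat \<lceil>\<alpha> / \<eta>\<rceil>"
  define c0 where "c0 = r / (8 * (R0 + 1) * (\<alpha> * A * M + 1))"
  have aAM: "0 \<le> \<alpha> * A * M" using al A0 M_nonneg by simp
  have c00: "0 < c0" using r R00 aAM by (simp add: c0_def)
  define T where "T = A + max 1 (ln (1 / c0) / \<mu>)"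
  show ?thesis
  proof (intro exI[of _ T] allI impI)
    fix t assume tT: "T \<le> t"
    have At: "A < t" using tT by (simp add: T_def)
    have ec: "exp (-\<mu>*(t-A)) \<le> c0"
    proof -
      have "ln (1 / c0) / \<mu> \<le> t - A" using tT by (simp add: T_def)
      then have "ln (1 / c0) \<le> \<mu> * (t - A)" using mu by (simp add: pos_divide_le_eq mult.commute)
      then have "exp (-\<mu>*(t-A)) \<le> exp (- ln (1 / c0))" by simp
      also have "\<dots> = c0" using c00 by (simp add: ln_div)
      finally show ?thesis .
    qed
    have et: "exp (-\<mu>*t) \<le> c0"
    proof -
      have "exp (-\<mu>*t) \<le> exp (-\<mu>*(t-A))" using mu A0 by simp
      then show ?thesis using ec by linarith
    qed
    have bound: "exp (-\<mu>*t) * R0 + \<alpha> * (exp (-\<mu>*A) / \<mu>) + \<alpha> * (M * c0 * R0 + \<alpha> * \<eta>1 + \<eta>) * A \<le> r"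
    proof -
      have b1: "exp (-\<mu>*t) * R0 \<le> r / 8"
      proof -
        have "exp (-\<mu>*t) * R0 \<le> c0 * R0" using et R00 by (intro mult_right_mono) auto
        also have "\<dots> = (r / 8) * (R0 / ((R0 + 1) * (\<alpha> * A * M + 1)))"
          by (simp add: c0_def field_simps)
        also have "\<dots> \<le> (r / 8) * 1"
        proof -
          have e: "(R0 + 1) * (\<alpha> * A * M + 1) = R0 + 1 + (\<alpha> * A * M) * (R0 + 1)" by (simp add: algebra_simps)
          have "0 \<le> (\<alpha> * A * M) * (R0 + 1)" using aAM R00 by simp
          then have "R0 \<le> (R0 + 1) * (\<alpha> * A * M + 1)" using e by linarith
          then have "R0 / ((R0 + 1) * (\<alpha> * A * M + 1)) \<le> 1" using R00 aAM by (simp add: divide_le_eq_1)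
          then show ?thesis using r by (intro mult_left_mono) auto
        qed
        finally show ?thesis by simp
      qed
      have b3: "\<alpha> * (M * c0 * R0) * A \<le> r / 8"
      proof -
        have "\<alpha> * (M * c0 * R0) * A = (r / 8) * ((\<alpha> * A * M) * R0 / ((R0 + 1) * (\<alpha> * A * M + 1)))"
          by (simp add: c0_def field_simps)
        also have "\<dots> \<le> (r / 8) * 1"
        proof -
          have "(\<alpha> * A * M) * R0 \<le> (\<alpha> * A * M + 1) * (R0 + 1)" using R00 aAM
            by (intro mult_mono) auto
          then have "(\<alpha> * A * M) * R0 / ((R0 + 1) * (\<alpha> * A * M + 1)) \<le> 1" using R00 aAM
            by (simp add: divide_le_eq_1 mult.commute)
          then show ?thesis using r by (intro mult_left_mono) auto
        qed
        finally show ?thesis by simp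
      qed
      have b4: "\<alpha> * (\<alpha> * \<eta>1) * A = r / 8" using al A0 by (simp add: \<eta>1_def field_simps)
      have b5: "\<alpha> * \<eta> * A = r / 8" using al A0 by (simp add: \<eta>_def field_simps)
      have "\<alpha> * (M * c0 * R0 + \<alpha> * \<eta>1 + \<eta>) * A = \<alpha> * (M * c0 * R0) * A + \<alpha> * (\<alpha> * \<eta>1) * A + \<alpha> * \<eta> * A"
        by (simp add: algebra_simps)
      then show ?thesis using b1 eA b3 b4 b5 r by linarith
    qed
    define C where "C = cen A h \<eta> ` (Pi\<^sub>E {..<N} (\<lambda>_. {..P}))"
    have Cfin: "finite C" unfolding C_def by (intro finite_imageI finite_PiE) auto
    have CL: "C \<subseteq> L1p" unfolding C_def using cen_L1p eta0 A0 by auto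
    have cover: "U t ` B \<subseteq> (\<Union>c\<in>C. {u. L1dist u c \<le> r})"
    proof
      fix u assume "u \<in> U t ` B"
      then obtain u0 where u0B: "u0 \<in> B" and uu: "u = U t u0" by auto
      have u0: "u0 \<in> L1p" using u0B BL by auto
      obtain b where bc: "continuous_on {0..} b"
        and beq: "\<forall>t\<ge>0. b t = \<alpha> * fnl ((LINT a:{t<..}|lborel. \<beta> a * exp (- \<mu> * t) * u0 (a - t))
                               + (LINT a:{0<..<t}|lborel. \<beta> a * exp (- \<mu> * a) * b (t - a)))"
        and Ueq: "\<forall>t\<ge>0. \<forall>a>0. U t u0 a =
            (if t \<le> a then exp (- \<mu> * t) * u0 (a - t) else exp (- \<mu> * a) * b (t - a))"
        using U u0 unfolding is_semiflow_def by blast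
      have sb: "sol u0 b" unfolding sol_def I1_def J_def using bc beq by auto
      define v where "v = restrict (\<lambda>j. nat \<lfloor>J b (t - real j * h) / \<eta>\<rfloor>) {..<N}"
      have vP: "v \<in> Pi\<^sub>E {..<N} (\<lambda>_. {..P})"
      proof -
        have "nat \<lfloor>J b (t - real j * h) / \<eta>\<rfloor> \<le> P" for j
        proof -
          have "J b (t - real j * h) / \<eta> \<le> \<alpha> / \<eta>"
            using J_bounds(2)[OF u0 sb] eta0 by (simp add: divide_right_mono)
          then have "\<lfloor>J b (t - real j * h) / \<eta>\<rfloor> \<le> \<lceil>\<alpha> / \<eta>\<rceil>" by linarith
          then show ?thesis unfolding P_def by (simp add: nat_mono)
        qed
        then show ?thesis unfolding v_def by auto
      qed
      have "L1dist (U t u0) (cen A h \<eta> v) \<le> exp (-\<mu>*t) * R0 + \<alpha> * (exp (-\<mu>*A) / \<mu>) + \<alpha> * (M * c0 * R0 + \<alpha> * \<eta>1 + \<eta>) * A"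
      proof (rule dist_bound[OF u0 sb BR0[OF u0B] _ A0 At ec h0 hN d hd eta0])
        show "\<And>a. a > 0 \<Longrightarrow> U t u0 a = (if t \<le> a then exp (-\<mu>*t) * u0 (a-t) else exp (-\<mu>*a) * b (t-a))"
          using Ueq A0 At by auto
        show "\<And>j. j < N \<Longrightarrow> v j = nat \<lfloor>J b (t - real j * h) / \<eta>\<rfloor>" by (simp add: v_def)
      qed
      then have "L1dist u (cen A h \<eta> v) \<le> r" using bound unfolding uu by linarith
      moreover have "cen A h \<eta> v \<in> C" using vP unfolding C_def by auto
      ultimately show "u \<in> (\<Union>c\<in>C. {u. L1dist u c \<le> r})" by blast
    qed
    show "kuratowski (U t ` B) \<le> ereal r"
      unfolding kuratowski_def
      by (rule Inf_lower) (use r Cfin CL cover in blast)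
  qed
qed

end

lemma kuratowski_nonneg: "0 \<le> kuratowski S"
  unfolding kuratowski_def by (rule Inf_greatest) auto


theorem theorem4p2:
  fixes \<mu> \<alpha> :: real and \<beta> :: "real \<Rightarrow> real"
    and U :: "real \<Rightarrow> (real \<Rightarrow> real) \<Rightarrow> (real \<Rightarrow> real)"
  assumes "\<mu> > 0" and "\<alpha> > 0"
    and "\<beta> \<in> borel_measurable lborel"
    and "\<exists>M. \<forall>a>0. 0 \<le> \<beta> a \<and> \<beta> a \<le> M"
    and "(LINT a:{0<..}|lborel. \<beta> a * exp (- \<mu> * a)) = 1"
    and "is_semiflow \<mu> \<alpha> \<beta> U"
  shows "\<forall>B. B \<subseteq> L1p \<and> (\<exists>R. \<forall>u\<in>B. L1norm u \<le> R) \<longrightarrow>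
           ((\<lambda>t. kuratowski (U t ` B)) \<longlongrightarrow> 0) at_top"
proof -
  obtain M where Mb: "\<forall>a>0. 0 \<le> \<beta> a \<and> \<beta> a \<le> M" using assms(4) by blast
  interpret m: model \<mu> \<alpha> \<beta> M
    by unfold_locales (use assms Mb in auto)
  show ?thesis
  proof (intro allI impI)
    fix B assume "B \<subseteq> L1p \<and> (\<exists>R. \<forall>u\<in>B. L1norm u \<le> R)"
    then obtain R where BL: "B \<subseteq> L1p" and BR: "\<And>u. u \<in> B \<Longrightarrow> L1norm u \<le> R" by blast
    show "((\<lambda>t. kuratowski (U t ` B)) \<longlongrightarrow> 0) at_top"
    proof (rule order_tendstoI)
      fix y :: ereal assume y: "y < 0"
      have "\<forall>t. y < kuratowski (U t ` B)" using kuratowski_nonneg y by (metis less_le_trans)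
      then show "eventually (\<lambda>t. y < kuratowski (U t ` B)) at_top" by (simp add: always_eventually)
    next
      fix y :: ereal assume y: "0 < y"
      obtain z where z: "0 < ereal z" "ereal z < y" using ereal_dense2[OF y] by blast
      then have z0: "0 < z" by simp
      obtain T where T: "\<forall>t\<ge>T. kuratowski (U t ` B) \<le> ereal z"
        using m.main_cover[OF assms(6) BL BR z0] by blast
      show "eventually (\<lambda>t. kuratowski (U t ` B) < y) at_top"
        unfolding eventually_at_top_linorder using T z(2) le_less_trans by blast
    qed
  qed
qed

end
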